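(* Let $\operatorname{Cs}(4)=\{x,y,z\}$ be the quandle with multiplication $xx=x$, $yy=y$, $zz=z$, $xy=x$, $xz=y$, $yx=y$, $yz=x$, $zx=z$, $zy=z$. Then $\operatorname{Aut}(\mathbb{Z}[\operatorname{Cs}(4)])\cong\mathbb{Z}_2$.
   Context: For a quandle $Q$, the quandle ring $\mathbb{Z}[Q]$ is the free abelian group with basis $Q$, with multiplication $\big(\sum_i\alpha_i q_i\big)\big(\sum_j\beta_j q_j\big)=\sum_{i,j}\alpha_i\beta_j (q_iq_j)$. $\operatorname{Aut}(\mathbb{Z}[Q])$ denotes the group of ring automorphisms of $\mathbb{Z}[Q]$ (bijective additive maps preserving the multiplication). *)

theory Defs
  imports "HOL-Algebra.Elementary_Groups"
begin

datatype cs4 = X | Y | Z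

lemma UNIV_cs4: "(UNIV :: cs4 set) = {X, Y, Z}"
  by (auto intro: cs4.exhaust)

instance cs4 :: finite
  by standard (simp add: UNIV_cs4)

fun cs4_op :: "cs4 \<Rightarrow> cs4 \<Rightarrow> cs4" where
  "cs4_op X X = X" | "cs4_op Y Y = Y" | "cs4_op Z Z = Z"
| "cs4_op X Y = X" | "cs4_op X Z = Y"
| "cs4_op Y X = Y" | "cs4_op Y Z = X"
| "cs4_op Z X = Z" | "cs4_op Z Y = Z"

text \<open>Quandle ring Z[Q] for a finite quandle Q: elements are the integer coefficient
  functions Q \<Rightarrow> int (free abelian group on Q, Q finite); addition pointwise;
  multiplication is the bilinear extension of the quandle operation.\<close>
definition qring_mult :: "('q::finite \<Rightarrow> 'q \<Rightarrow> 'q) \<Rightarrow> ('q \<Rightarrow> int) \<Rightarrow> ('q \<Rightarrow> int) \<Rightarrow> ('q \<Rightarrow> int)" where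
  "qring_mult op a b = (\<lambda>r. \<Sum>p\<in>UNIV. \<Sum>q\<in>UNIV. if op p q = r then a p * b q else 0)"

definition qring_aut :: "('q::finite \<Rightarrow> 'q \<Rightarrow> 'q) \<Rightarrow> (('q \<Rightarrow> int) \<Rightarrow> ('q \<Rightarrow> int)) \<Rightarrow> bool" where
  "qring_aut op f \<longleftrightarrow> bij f \<and> (\<forall>a b. f (\<lambda>q. a q + b q) = (\<lambda>q. f a q + f b q))
     \<and> (\<forall>a b. f (qring_mult op a b) = qring_mult op (f a) (f b))"

definition qring_Aut :: "('q::finite \<Rightarrow> 'q \<Rightarrow> 'q) \<Rightarrow> (('q \<Rightarrow> int) \<Rightarrow> ('q \<Rightarrow> int)) monoid" where
  "qring_Aut op = \<lparr>carrier = {f. qring_aut op f}, monoid.mult = (\<lambda>f g. f \<circ> g), one = id\<rparr>"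

end

theory Submission
  imports Defs
begin

definition e :: "cs4 \<Rightarrow> cs4 \<Rightarrow> int" where "e p = (\<lambda>r. if r = p then 1 else 0)"

fun sw :: "cs4 \<Rightarrow> cs4" where "sw X = Y" | "sw Y = X" | "sw Z = Z"

definition S :: "(cs4 \<Rightarrow> int) \<Rightarrow> (cs4 \<Rightarrow> int)" where "S a = (\<lambda>q. a (sw q))"

lemma qmX: "qring_mult cs4_op a b X = a X * (b X + b Y) + a Y * b Z" by (simp add: qring_mult_def UNIV_cs4 distrib_left)
lemma qmY: "qring_mult cs4_op a b Y = a Y * (b X + b Y) + a X * b Z" by (simp add: qring_mult_def UNIV_cs4 distrib_left)
lemma qmZ: "qring_mult cs4_op a b Z = a Z * (b X + b Y + b Z)" by (simp add: qring_mult_def UNIV_cs4 distrib_left)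

lemma cs4_fun_eq: "(f::cs4 \<Rightarrow> int) = g \<longleftrightarrow> f X = g X \<and> f Y = g Y \<and> f Z = g Z"
proof
  assume "f X = g X \<and> f Y = g Y \<and> f Z = g Z"
  then show "f = g" by (intro ext) (case_tac x, auto)
qed simp

lemma SS: "S (S a) = a"
  by (rule ext, case_tac x) (simp_all add: S_def)

lemma S_aut: "qring_aut cs4_op S"
  unfolding qring_aut_def
proof (intro conjI allI)
  show "bij S" by (metis SS bij_betw_byWitness subset_UNIV surjI surj_def)
next
  fix a b show "S (\<lambda>q. a q + b q) = (\<lambda>q. S a q + S b q)" by (simp add: S_def)
next
  fix a b show "S (qring_mult cs4_op a b) = qring_mult cs4_op (S a) (S b)"
    by (simp add: cs4_fun_eq S_def qmX qmY qmZ algebra_simps)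
qed

lemma id_aut: "qring_aut cs4_op id"
  unfolding qring_aut_def by simp

lemma add_zero:
  fixes f :: "('q \<Rightarrow> int) \<Rightarrow> ('q \<Rightarrow> int)"
  assumes "\<forall>a b. f (\<lambda>q. a q + b q) = (\<lambda>q. f a q + f b q)"
  shows "f (\<lambda>q. 0) = (\<lambda>q. 0::int)"
proof -
  have "f (\<lambda>q. 0 + 0) = (\<lambda>q. f (\<lambda>q. 0) q + f (\<lambda>q. 0) q)" using assms[rule_format, of "\<lambda>q. 0" "\<lambda>q. 0"] by simp
  then have "\<And>q. f (\<lambda>q. 0) q = f (\<lambda>q. 0) q + f (\<lambda>q. 0) q" by (metis add_0)
  then show ?thesis by auto
qed

lemma add_nat:
  fixes f :: "('q \<Rightarrow> int) \<Rightarrow> ('q \<Rightarrow> int)"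
  assumes A: "\<forall>a b. f (\<lambda>q. a q + b q) = (\<lambda>q. f a q + f b q)"
  shows "f (\<lambda>q. int n * a q) = (\<lambda>q. int n * (f a q::int))"
proof (induction n)
  case 0 then show ?case using add_zero[OF A] by simp
next
  case (Suc n)
  have "f (\<lambda>q. int (Suc n) * a q) = f (\<lambda>q. int n * a q + a q)" by (simp add: algebra_simps)
  also have "\<dots> = (\<lambda>q. f (\<lambda>q. int n * a q) q + f a q)" using A[rule_format, of "\<lambda>q. int n * a q" a] by simp
  finally show ?case using Suc by (simp add: algebra_simps)
qed

lemma add_neg:
  fixes f :: "('q \<Rightarrow> int) \<Rightarrow> ('q \<Rightarrow> int)"
  assumes A: "\<forall>a b. f (\<lambda>q. a q + b q) = (\<lambda>q. f a q + f b q)"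
  shows "f (\<lambda>q. - a q) = (\<lambda>q. - (f a q::int))"
proof -
  have "f (\<lambda>q. - a q + a q) = (\<lambda>q. f (\<lambda>q. - a q) q + f a q)" using A[rule_format, of "\<lambda>q. - a q" a] by simp
  then have "(\<lambda>q. 0) = (\<lambda>q. f (\<lambda>q. - a q) q + f a q)" using add_zero[OF A] by simp
  then have h: "\<And>q. f (\<lambda>q. - a q) q + f a q = 0" by (metis (no_types) fun_cong)
  show ?thesis by (rule ext) (simp add: eq_neg_iff_add_eq_0 h)
qed

lemma add_int:
  fixes f :: "('q \<Rightarrow> int) \<Rightarrow> ('q \<Rightarrow> int)"
  assumes A: "\<forall>a b. f (\<lambda>q. a q + b q) = (\<lambda>q. f a q + f b q)"
  shows "f (\<lambda>q. n * a q) = (\<lambda>q. n * (f a q::int))"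
proof (cases "n \<ge> 0")
  case True
  then obtain m where "n = int m" using nonneg_int_cases by blast
  then show ?thesis using add_nat[OF A] by simp
next
  case False
  define m where "m = nat (- n)"
  have m: "n = - int m" using False m_def by simp
  have "f (\<lambda>q. n * a q) = f (\<lambda>q. - (int m * a q))" using m by simp
  also have "\<dots> = (\<lambda>q. - f (\<lambda>q. int m * a q) q)" using add_neg[OF A, of "\<lambda>q. int m * a q"] by simp
  finally show ?thesis using add_nat[OF A, of m a] m by simp
qed

lemma decomp: "a = (\<lambda>q. a X * e X q + a Y * e Y q + a Z * e Z q)"
  by (rule ext, case_tac q) (simp_all add: e_def)

lemma lin:
  fixes f :: "(cs4 \<Rightarrow> int) \<Rightarrow> (cs4 \<Rightarrow> int)"
  assumes A: "\<forall>a b. f (\<lambda>q. a q + b q) = (\<lambda>q. f a q + f b q)"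
  shows "f a = (\<lambda>q. a X * f (e X) q + a Y * f (e Y) q + a Z * f (e Z) q)"
proof -
  have 1: "f a = f (\<lambda>q. a X * e X q + a Y * e Y q + a Z * e Z q)" by (rule arg_cong[where f=f, OF decomp])
  have 2: "f (\<lambda>q. a X * e X q + a Y * e Y q + a Z * e Z q) = (\<lambda>q. f (\<lambda>q. a X * e X q + a Y * e Y q) q + f (\<lambda>q. a Z * e Z q) q)"
    using A[rule_format, of "\<lambda>q. a X * e X q + a Y * e Y q" "\<lambda>q. a Z * e Z q"] by simp
  have 3: "f (\<lambda>q. a X * e X q + a Y * e Y q) = (\<lambda>q. f (\<lambda>q. a X * e X q) q + f (\<lambda>q. a Y * e Y q) q)"
    using A[rule_format, of "\<lambda>q. a X * e X q" "\<lambda>q. a Y * e Y q"] by simp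
  have 4: "f a = (\<lambda>q. f (\<lambda>q. a X * e X q) q + f (\<lambda>q. a Y * e Y q) q + f (\<lambda>q. a Z * e Z q) q)"
    by (subst 1, subst 2, subst 3, rule refl)
  show ?thesis apply (subst 4) apply (subst add_int[OF A, of "a X" "e X"]) apply (subst add_int[OF A, of "a Y" "e Y"]) apply (subst add_int[OF A, of "a Z" "e Z"]) by (rule refl)
qed

lemma eX_right: "qring_mult cs4_op a (e X) = a"
  by (simp add: cs4_fun_eq qmX qmY qmZ e_def)
lemma eY_right: "qring_mult cs4_op a (e Y) = a"
  by (simp add: cs4_fun_eq qmX qmY qmZ e_def)
lemma eZ_right: "qring_mult cs4_op a (e Z) = S a"
  by (simp add: cs4_fun_eq qmX qmY qmZ e_def S_def)

lemma aut_cases: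
  assumes "qring_aut cs4_op f"
  shows "f = id \<or> f = S"
proof -
  have B: "bij f" and A: "\<forall>a b. f (\<lambda>q. a q + b q) = (\<lambda>q. f a q + f b q)"
    and M: "\<And>a b. f (qring_mult cs4_op a b) = qring_mult cs4_op (f a) (f b)"
    using assms unfolding qring_aut_def by auto
  define u where "u = f (e X)"
  define v where "v = f (e Y)"
  define w where "w = f (e Z)"
  have Ru: "qring_mult cs4_op b u = b" for b
  proof -
    obtain a where "b = f a" using B by (metis bij_pointE)
    then show ?thesis using M[of a "e X"] eX_right u_def by simp
  qed
  have Rv: "qring_mult cs4_op b v = b" for b
  proof -
    obtain a where "b = f a" using B by (metis bij_pointE)
    then show ?thesis using M[of a "e Y"] eY_right v_def by simp
  qed
  have Rw: "qring_mult cs4_op (qring_mult cs4_op b w) w = b" for b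
  proof -
    obtain a where "b = f a" using B by (metis bij_pointE)
    then show ?thesis using M[of a "e Z"] M[of "S a" "e Z"] eZ_right w_def SS by simp
  qed
  have u1: "u X + u Y = 1" "u Z = 0"
    using fun_cong[OF Ru[of "e X"], of X] fun_cong[OF Ru[of "e X"], of Y]
    by (simp_all add: qmX qmY e_def)
  have v1: "v X + v Y = 1" "v Z = 0"
    using fun_cong[OF Rv[of "e X"], of X] fun_cong[OF Rv[of "e X"], of Y]
    by (simp_all add: qmX qmY e_def)
  define t where "t = w X + w Y"
  define c where "c = w Z"
  have w1: "t * t + c * c = 1" "t * c = 0"
    using fun_cong[OF Rw[of "e X"], of X] fun_cong[OF Rw[of "e X"], of Y]
    by (simp_all add: qmX qmY e_def t_def c_def algebra_simps)
  have uw: "qring_mult cs4_op u w = v"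
    using M[of "e X" "e Z"] u_def v_def w_def
    by (metis eZ_right S_def cs4_fun_eq e_def sw.simps cs4.distinct) 
  have vw: "qring_mult cs4_op v w = u"
    using M[of "e Y" "e Z"] u_def v_def w_def
    by (metis eZ_right S_def cs4_fun_eq e_def sw.simps cs4.distinct)
  have ww: "qring_mult cs4_op w w = w"
    using M[of "e Z" "e Z"] w_def
    by (metis eZ_right S_def cs4_fun_eq e_def sw.simps cs4.distinct)
  have uvX: "v X = u X * t + u Y * c" "v Y = u Y * t + u X * c"
    using fun_cong[OF uw, of X] fun_cong[OF uw, of Y] by (simp_all add: qmX qmY t_def c_def)
  have ne: "u \<noteq> v"
  proof
    assume "u = v"
    then have "e X = e Y" using B u_def v_def by (metis bij_is_inj injD)
    then have "e X X = e Y X" by simp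
    then show False by (simp add: e_def)
  qed
  have t0: "t = 0"
  proof (rule ccontr)
    assume "t \<noteq> 0"
    then have "c = 0" using w1 by simp
    then have "t * t = 1" using w1 by simp
    then have "t = 1 \<or> t = -1" using zmult_eq_1_iff by blast
    have "v X + v Y = t * (u X + u Y)" using uvX \<open>c = 0\<close> by (simp add: algebra_simps)
    then have "t = 1" using v1 u1 by simp
    then have "u = v" using uvX u1 v1 \<open>c = 0\<close> by (simp add: cs4_fun_eq)
    then show False using ne by simp
  qed
  have "v X + v Y = c * (u X + u Y)" using uvX t0 by (simp add: algebra_simps)
  then have c1: "c = 1" using v1 u1 by simp
  have wXY: "w X = w Y" using fun_cong[OF ww, of X] t0 c1 by (simp add: qmX t_def c_def)
  have wE: "w = e Z" using wXY t0 c1 by (simp add: cs4_fun_eq e_def t_def c_def)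
  define k where "k = u X"
  have uE: "u X = k" "u Y = 1 - k" "u Z = 0" using u1 k_def by auto
  have vE: "v X = 1 - k" "v Y = k" "v Z = 0" using uvX uE t0 c1 v1 by auto
  have fa: "f a = (\<lambda>q. a X * u q + a Y * v q + a Z * w q)" for a
    using lin[OF A, of a] u_def v_def w_def by simp
  obtain a where fae: "f a = e X" using B by (metis bij_pointE)
  have g: "(\<lambda>q. a X * u q + a Y * v q + a Z * w q) = e X" using fa[of a] fae by simp
  have gX: "a X * u X + a Y * v X + a Z * w X = 1" using fun_cong[OF g, of X] by (simp add: e_def)
  have gY: "a X * u Y + a Y * v Y + a Z * w Y = 0" using fun_cong[OF g, of Y] by (simp add: e_def)
  have "a X * k + a Y * (1 - k) = 1" "a X * (1 - k) + a Y * k = 0"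
    using gX gY uE vE wE by (simp_all add: e_def)
  then have "(a X - a Y) * (2 * k - 1) = 1" by (simp add: algebra_simps)
  then have "2 * k - 1 = 1 \<or> 2 * k - 1 = -1" using zmult_eq_1_iff by blast
  then have "k = 1 \<or> k = 0" by auto
  then show ?thesis
  proof
    assume "k = 1"
    have "f b = b" for b
      unfolding fa[of b] cs4_fun_eq using uE vE wE \<open>k = 1\<close> by (simp add: e_def)
    then have "f = id" by (simp add: fun_eq_iff)
    then show ?thesis by simp
  next
    assume "k = 0"
    have "f b = S b" for b
      unfolding fa[of b] cs4_fun_eq using uE vE wE \<open>k = 0\<close> by (simp add: e_def S_def)
    then have "f = S" by (simp add: fun_eq_iff)
    then show ?thesis by simp
  qed
qed

lemma S_ne_id: "S \<noteq> id"
proof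
  assume "S = id"
  then have "S (e X) Y = e X Y" by simp
  then show False by (simp add: S_def e_def)
qed

lemma SoS: "S \<circ> S = id"
  using SS by (auto simp: fun_eq_iff)

lemma carrier_Aut: "carrier (qring_Aut cs4_op) = {id, S}"
  using aut_cases id_aut S_aut by (auto simp: qring_Aut_def)

lemma mult_Aut: "monoid.mult (qring_Aut cs4_op) = (\<lambda>f g. f \<circ> g)"
  by (simp add: qring_Aut_def)

theorem theorem6p2:
  shows "qring_Aut cs4_op \<cong> integer_mod_group 2"
proof (rule is_isoI)
  define h where "h = (\<lambda>f::(cs4 \<Rightarrow> int) \<Rightarrow> (cs4 \<Rightarrow> int). if f = id then (0::int) else 1)"
  have hom: "h \<in> hom (qring_Aut cs4_op) (integer_mod_group 2)"
    unfolding hom_def using S_ne_id SoS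
    by (auto simp: carrier_Aut carrier_integer_mod_group h_def mult_Aut)
  have "bij_betw h {id, S} {0..<2}"
    using S_ne_id unfolding bij_betw_def h_def by (auto simp: inj_on_def)
  then show "h \<in> iso (qring_Aut cs4_op) (integer_mod_group 2)"
    using hom by (simp add: iso_def carrier_Aut carrier_integer_mod_group)
qed

end
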